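(* $\mathrm{rad}(\mathcal{P}_\infty)\subset\mathcal{P}_2$. That is, if $r$ is a Hermitian symmetric polynomial on $\mathbb{C}^n$ with $r\ge0$ and $r^N(z,\overline z)=\|f(z)\|^2$ for some positive integer $N$ and holomorphic polynomial mapping $f$, then for all $z,w\in\mathbb{C}^n$ the $2\times2$ matrix $\begin{pmatrix} r(z,\overline z) & r(z,\overline w)\\ r(w,\overline z) & r(w,\overline w)\end{pmatrix}$ is non-negative definite.
   Context: A Hermitian symmetric polynomial is $r(z,\overline w)=\sum c_{\alpha\beta}z^\alpha\overline w^\beta$ with $c_{\alpha\beta}=\overline{c_{\beta\alpha}}$. $\mathcal{P}_\infty$: those $r$ with $r(z,\overline z)=\|h(z)\|^2$ for a holomorphic polynomial mapping $h$. $\mathrm{rad}(\mathcal{P}_\infty)$: those $r$ with $r(z,\overline z)\ge0$ for all $z$ and $r^N\in\mathcal{P}_\infty$ for some positive integer $N$. $\mathcal{P}_2$: those $r$ such that for all $z_1,z_2$ the matrix $(r(z_i,\overline{z_j}))_{i,j=1}^2$ is non-negative definite. *)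

theory Defs
  imports "HOL-Analysis.Analysis" "HOL-Library.Complex_Order"
begin

definition monom_eval :: "complex ^ 'n::finite \<Rightarrow> ('n \<Rightarrow> nat) \<Rightarrow> complex" where
  "monom_eval z \<alpha> = (\<Prod>i\<in>UNIV. (z $ i) ^ (\<alpha> i))"

text \<open>A polynomial in (z, conj w) given by its coefficients c alpha beta (finite support).\<close>
definition coeff_support :: "(('n \<Rightarrow> nat) \<Rightarrow> ('n \<Rightarrow> nat) \<Rightarrow> complex) \<Rightarrow> (('n \<Rightarrow> nat) \<times> ('n \<Rightarrow> nat)) set" where
  "coeff_support c = {p. c (fst p) (snd p) \<noteq> 0}"

definition hermitian_symmetric_poly :: "(('n \<Rightarrow> nat) \<Rightarrow> ('n \<Rightarrow> nat) \<Rightarrow> complex) \<Rightarrow> bool" where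
  "hermitian_symmetric_poly c \<longleftrightarrow> finite (coeff_support c) \<and> (\<forall>\<alpha> \<beta>. c \<alpha> \<beta> = cnj (c \<beta> \<alpha>))"

definition hsp_eval :: "(('n::finite \<Rightarrow> nat) \<Rightarrow> ('n \<Rightarrow> nat) \<Rightarrow> complex) \<Rightarrow> complex ^ 'n \<Rightarrow> complex ^ 'n \<Rightarrow> complex" where
  "hsp_eval c z w = (\<Sum>p\<in>coeff_support c. c (fst p) (snd p) * monom_eval z (fst p) * cnj (monom_eval w (snd p)))"

definition holo_poly :: "(('n \<Rightarrow> nat) \<Rightarrow> complex) \<Rightarrow> bool" where
  "holo_poly a \<longleftrightarrow> finite {\<alpha>. a \<alpha> \<noteq> 0}"

definition holo_poly_eval :: "(('n::finite \<Rightarrow> nat) \<Rightarrow> complex) \<Rightarrow> complex ^ 'n \<Rightarrow> complex" where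
  "holo_poly_eval a z = (\<Sum>\<alpha>\<in>{\<alpha>. a \<alpha> \<noteq> 0}. a \<alpha> * monom_eval z \<alpha>)"

definition nonneg_definite :: "nat \<Rightarrow> (nat \<Rightarrow> nat \<Rightarrow> complex) \<Rightarrow> bool" where
  "nonneg_definite k M \<longleftrightarrow> (\<forall>v :: nat \<Rightarrow> complex. 0 \<le> (\<Sum>i<k. \<Sum>j<k. cnj (v i) * M i j * v j))"

end

theory Submission
  imports Defs "HOL-Computational_Algebra.Polynomial"
begin


lemma poly_zero_reals:
  fixes p :: "complex poly"
  assumes "\<forall>x::real. poly p (complex_of_real x) = 0"
  shows "p = 0"
proof (rule ccontr)
  assume "p \<noteq> 0"
  hence "finite {x. poly p x = 0}" by (rule poly_roots_finite)
  moreover have "range (of_real :: real \<Rightarrow> complex) \<subseteq> {x. poly p x = 0}" using assms by auto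
  moreover have "infinite (range (of_real :: real \<Rightarrow> complex))"
    using finite_imageD[of "of_real :: real \<Rightarrow> complex" UNIV] infinite_UNIV_char_0 by (auto simp: inj_on_def)
  ultimately show False using finite_subset by blast
qed

lemma one_var:
  fixes C :: "'a \<Rightarrow> complex" and J L :: "'a \<Rightarrow> nat"
  assumes "\<forall>a. (\<Sum>p\<in>S. C p * a ^ J p * (cnj a) ^ L p) = 0"
  shows "(\<Sum>p\<in>S. C p * a ^ J p * b ^ L p) = 0"
proof -
  define Q where "Q x y = (\<Sum>p\<in>S. C p * (x + \<i>*y) ^ J p * (x - \<i>*y) ^ L p)" for x y
  have h0: "Q (complex_of_real x) (complex_of_real y) = 0" for x y :: real
  proof -
    have "cnj (complex_of_real x + \<i> * complex_of_real y) = complex_of_real x - \<i> * complex_of_real y" by simp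
    thus ?thesis using assms[rule_format, of "complex_of_real x + \<i> * complex_of_real y"] unfolding Q_def by simp
  qed
  have h1: "Q x (complex_of_real y) = 0" for x and y :: real
  proof -
    define P where "P = (\<Sum>p\<in>S. smult (C p) ([:\<i>*complex_of_real y, 1:] ^ J p * [:-\<i>*complex_of_real y, 1:] ^ L p))"
    have e: "poly P t = Q t (complex_of_real y)" for t
      unfolding P_def Q_def poly_sum by (simp add: algebra_simps)
    have "P = 0" using h0 e by (intro poly_zero_reals) auto
    thus ?thesis using e[of x] by simp
  qed
  have h2: "Q x y = 0" for x y
  proof -
    define P where "P = (\<Sum>p\<in>S. smult (C p) ([:x, \<i>:] ^ J p * [:x, -\<i>:] ^ L p))"
    have e: "poly P t = Q x t" for t
      unfolding P_def Q_def poly_sum by (simp add: algebra_simps)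
    have "P = 0" using h1 e by (intro poly_zero_reals) auto
    thus ?thesis using e[of y] by simp
  qed
  have "(a+b)/2 + \<i> * ((a-b)/(2*\<i>)) = a" "(a+b)/2 - \<i> * ((a-b)/(2*\<i>)) = b"
    by (auto simp: field_simps)
  thus ?thesis using h2[of "(a+b)/2" "(a-b)/(2*\<i>)"] unfolding Q_def by simp
qed



definition cnjv :: "complex ^ 'n \<Rightarrow> complex ^ 'n" where
  "cnjv w = (\<chi> i. cnj (w $ i))"

lemma monom_upd:
  fixes z :: "complex ^ 'n::finite"
  shows "monom_eval (\<chi> i. if i = k then a else z $ i) \<alpha> = a ^ \<alpha> k * (\<Prod>i\<in>UNIV-{k}. (z $ i) ^ \<alpha> i)"
  unfolding monom_eval_def
  by (subst prod.remove[of UNIV k]) (auto intro!: prod.cong)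

lemma polar:
  fixes D :: "'a \<Rightarrow> complex" and A B :: "'a \<Rightarrow> ('n::finite \<Rightarrow> nat)"
  assumes "\<forall>z. (\<Sum>p\<in>S. D p * monom_eval z (A p) * monom_eval (cnjv z) (B p)) = 0"
  shows "(\<Sum>p\<in>S. D p * monom_eval z (A p) * monom_eval \<zeta> (B p)) = 0"
proof -
  have "finite K \<Longrightarrow> \<forall>z \<zeta>. (\<forall>i. i \<notin> K \<longrightarrow> \<zeta> $ i = cnj (z $ i)) \<longrightarrow>
          (\<Sum>p\<in>S. D p * monom_eval z (A p) * monom_eval \<zeta> (B p)) = 0" for K :: "'n set"
  proof (induction K rule: finite_induct)
    case empty
    show ?case
    proof (intro allI impI)
      fix z \<zeta> :: "complex ^ 'n" assume "\<forall>i. i \<notin> {} \<longrightarrow> \<zeta> $ i = cnj (z $ i)"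
      hence "\<zeta> = cnjv z" by (simp add: cnjv_def vec_eq_iff)
      thus "(\<Sum>p\<in>S. D p * monom_eval z (A p) * monom_eval \<zeta> (B p)) = 0" using assms by simp
    qed
  next
    case (insert k K)
    show ?case
    proof (intro allI impI)
      fix z \<zeta> :: "complex ^ 'n" assume hz: "\<forall>i. i \<notin> insert k K \<longrightarrow> \<zeta> $ i = cnj (z $ i)"
      define zz where "zz a = (\<chi> i. if i = k then a else z $ i)" for a
      define \<zeta>\<zeta> where "\<zeta>\<zeta> b = (\<chi> i. if i = k then b else \<zeta> $ i)" for b
      define C where "C p = D p * (\<Prod>i\<in>UNIV-{k}. (z $ i) ^ A p i) * (\<Prod>i\<in>UNIV-{k}. (\<zeta> $ i) ^ B p i)" for p
      have ev: "(\<Sum>p\<in>S. D p * monom_eval (zz a) (A p) * monom_eval (\<zeta>\<zeta> b) (B p))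
             = (\<Sum>p\<in>S. C p * a ^ A p k * b ^ B p k)" for a b
        unfolding zz_def \<zeta>\<zeta>_def C_def monom_upd by (simp add: algebra_simps)
      have "\<forall>a. (\<Sum>p\<in>S. C p * a ^ A p k * (cnj a) ^ B p k) = 0"
      proof
        fix a
        have "\<forall>i. i \<notin> K \<longrightarrow> \<zeta>\<zeta> (cnj a) $ i = cnj (zz a $ i)"
          using hz unfolding zz_def \<zeta>\<zeta>_def by auto
        hence "(\<Sum>p\<in>S. D p * monom_eval (zz a) (A p) * monom_eval (\<zeta>\<zeta> (cnj a)) (B p)) = 0"
          using insert(3) by blast
        thus "(\<Sum>p\<in>S. C p * a ^ A p k * (cnj a) ^ B p k) = 0" using ev by simp
      qed
      hence "(\<Sum>p\<in>S. C p * (z $ k) ^ A p k * (\<zeta> $ k) ^ B p k) = 0" by (rule one_var)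
      moreover have "zz (z $ k) = z" "\<zeta>\<zeta> (\<zeta> $ k) = \<zeta>" unfolding zz_def \<zeta>\<zeta>_def by (auto simp: vec_eq_iff)
      ultimately show "(\<Sum>p\<in>S. D p * monom_eval z (A p) * monom_eval \<zeta> (B p)) = 0"
        using ev[of "z $ k" "\<zeta> $ k"] by simp
    qed
  qed
  from this[OF finite[of UNIV]] show ?thesis by blast
qed



definition ev :: "(complex \<times> ('n \<Rightarrow> nat) \<times> ('n \<Rightarrow> nat)) list \<Rightarrow> complex ^ 'n::finite \<Rightarrow> complex ^ 'n \<Rightarrow> complex" where
  "ev xs z \<zeta> = sum_list (map (\<lambda>t. fst t * monom_eval z (fst (snd t)) * monom_eval \<zeta> (snd (snd t))) xs)"

definition rep :: "(complex ^ 'n::finite \<Rightarrow> complex ^ 'n \<Rightarrow> complex) \<Rightarrow> bool" where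
  "rep g \<longleftrightarrow> (\<exists>xs. \<forall>z \<zeta>. g z \<zeta> = ev xs z \<zeta>)"

lemma monom_add: "monom_eval z (\<lambda>i. \<alpha> i + \<beta> i) = monom_eval z \<alpha> * monom_eval z \<beta>"
  unfolding monom_eval_def by (simp add: power_add prod.distrib)

lemma monom_0: "monom_eval z (\<lambda>i. 0) = 1"
  unfolding monom_eval_def by simp

lemma ev_append: "ev (xs @ ys) z \<zeta> = ev xs z \<zeta> + ev ys z \<zeta>"
  unfolding ev_def by simp

lemma ev_cons: "ev (x # xs) z \<zeta> = fst x * monom_eval z (fst (snd x)) * monom_eval \<zeta> (snd (snd x)) + ev xs z \<zeta>"
  unfolding ev_def by simp

lemma ev_nil: "ev [] z \<zeta> = 0"
  unfolding ev_def by simp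

definition pmul where
  "pmul xs ys = concat (map (\<lambda>s. map (\<lambda>t. (fst s * fst t, \<lambda>i. fst (snd s) i + fst (snd t) i, \<lambda>i. snd (snd s) i + snd (snd t) i)) ys) xs)"

lemma ev_map_mul: "ev (map (\<lambda>t. (fst s * fst t, \<lambda>i. fst (snd s) i + fst (snd t) i, \<lambda>i. snd (snd s) i + snd (snd t) i)) ys) z \<zeta>
   = (fst s * monom_eval z (fst (snd s)) * monom_eval \<zeta> (snd (snd s))) * ev ys z \<zeta>"
  by (induction ys) (simp_all add: ev_cons ev_nil monom_add algebra_simps)

lemma ev_pmul: "ev (pmul xs ys) z \<zeta> = ev xs z \<zeta> * ev ys z \<zeta>"
  unfolding pmul_def
  by (induction xs) (simp_all add: ev_append ev_map_mul ev_cons ev_nil algebra_simps)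

lemma rep_mult: "rep f \<Longrightarrow> rep g \<Longrightarrow> rep (\<lambda>z \<zeta>. f z \<zeta> * g z \<zeta>)"
  unfolding rep_def by (metis ev_pmul)

lemma rep_add: "rep f \<Longrightarrow> rep g \<Longrightarrow> rep (\<lambda>z \<zeta>. f z \<zeta> + g z \<zeta>)"
  unfolding rep_def by (metis ev_append)

lemma rep_const: "rep (\<lambda>z \<zeta>. c)"
  unfolding rep_def by (rule exI[of _ "[(c, \<lambda>i. 0, \<lambda>i. 0)]"]) (simp add: ev_cons ev_nil monom_0)

lemma rep_diff: "rep f \<Longrightarrow> rep g \<Longrightarrow> rep (\<lambda>z \<zeta>. f z \<zeta> - g z \<zeta>)"
proof -
  assume "rep f" "rep g"
  hence "rep (\<lambda>z \<zeta>. f z \<zeta> + (-1) * g z \<zeta>)" by (intro rep_add rep_mult rep_const)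
  thus ?thesis by simp
qed

lemma rep_power: "rep f \<Longrightarrow> rep (\<lambda>z \<zeta>. f z \<zeta> ^ n)"
  by (induction n) (simp_all add: rep_const rep_mult)

lemma rep_sum: "(\<And>j. j < m \<Longrightarrow> rep (g j)) \<Longrightarrow> rep (\<lambda>z \<zeta>. \<Sum>j<(m::nat). g j z \<zeta>)"
  by (induction m) (simp_all add: rep_const rep_add)

lemma rep_finsum:
  assumes "finite S"
  shows "rep (\<lambda>z \<zeta>. \<Sum>p\<in>S. D p * monom_eval z (A p) * monom_eval \<zeta> (B p))"
proof -
  obtain l where l: "set l = S" "distinct l" using finite_distinct_list[OF assms] by blast
  show ?thesis unfolding rep_def
    by (rule exI[of _ "map (\<lambda>p. (D p, A p, B p)) l"])
       (simp add: ev_def l(1)[symmetric] sum.distinct_set_conv_list[OF l(2)] o_def)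
qed

lemma rep_polar:
  assumes "rep g" "\<forall>z. g z (cnjv z) = 0"
  shows "g z \<zeta> = 0"
proof -
  obtain xs where xs: "\<forall>z \<zeta>. g z \<zeta> = ev xs z \<zeta>" using assms(1) unfolding rep_def by blast
  have e: "ev xs z \<zeta> = (\<Sum>i\<in>{..<length xs}. fst (xs!i) * monom_eval z (fst (snd (xs!i))) * monom_eval \<zeta> (snd (snd (xs!i))))" for z \<zeta>
    unfolding ev_def by (simp add: sum_list_sum_nth atLeast0LessThan)
  show ?thesis using xs assms(2) e polar[where S="{..<length xs}" and D="\<lambda>i. fst (xs!i)" and A="\<lambda>i. fst (snd (xs!i))" and B="\<lambda>i. snd (snd (xs!i))"]
    by metis
qed



lemma cnj_monom: "cnj (monom_eval w \<beta>) = monom_eval (cnjv w) \<beta>"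
  unfolding monom_eval_def cnjv_def by (simp add: cnj_prod)

lemma ineq2:
  fixes a d p q B :: real
  assumes "a \<ge> 0" "d \<ge> 0" "p \<ge> 0" "q \<ge> 0" "B \<ge> 0" "B^2 \<le> a*d"
  shows "2*p*q*B \<le> a*p^2 + d*q^2"
proof -
  have "B \<le> sqrt a * sqrt d" by (metis real_le_rsqrt real_sqrt_mult assms(6))
  hence "(2*p*q)*B \<le> (2*p*q)*(sqrt a * sqrt d)" by (rule mult_left_mono) (use assms in auto)
  hence "2*p*q*B \<le> 2*(sqrt a * p)*(sqrt d * q)" by (simp add: ac_simps)
  also have "\<dots> \<le> (sqrt a * p)^2 + (sqrt d * q)^2"
    using sum_squares_bound[of "sqrt a * p" "sqrt d * q"] by simp
  also have "\<dots> = a*p^2 + d*q^2" using assms by (simp add: power_mult_distrib)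
  finally show ?thesis .
qed

lemma psd2:
  fixes a d :: real and b :: complex
  assumes "a \<ge> 0" "d \<ge> 0" "(cmod b)^2 \<le> a*d"
  shows "nonneg_definite 2 (\<lambda>i j. if i = 0 then (if j = 0 then complex_of_real a else b)
                                   else (if j = 0 then cnj b else complex_of_real d))"
  unfolding nonneg_definite_def
proof
  fix v :: "nat \<Rightarrow> complex"
  let ?x = "cnj (v 0) * b * v 1"
  have e: "(\<Sum>i<2. \<Sum>j<2. cnj (v i) * (if i = 0 then (if j = 0 then complex_of_real a else b)
                                   else (if j = 0 then cnj b else complex_of_real d)) * v j)
     = complex_of_real (a * (cmod (v 0))^2 + d * (cmod (v 1))^2 + 2 * Re ?x)"
  proof -
    define x where "x = ?x"
    have h1: "x + cnj x = complex_of_real (2 * Re x)" by (simp add: complex_add_cnj)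
    have h2: "cnj x = v 0 * cnj b * cnj (v 1)" unfolding x_def by simp
    have h3: "cnj (v 0) * v 0 = complex_of_real ((cmod (v 0))^2)"
       "cnj (v 1) * v 1 = complex_of_real ((cmod (v 1))^2)"
      by (metis complex_norm_square mult.commute)+
    have "(\<Sum>i<2. \<Sum>j<2. cnj (v i) * (if i = 0 then (if j = 0 then complex_of_real a else b)
                                   else (if j = 0 then cnj b else complex_of_real d)) * v j)
       = complex_of_real a * (cnj (v 0) * v 0) + complex_of_real d * (cnj (v 1) * v 1) + (x + cnj x)"
      unfolding h2 x_def by (simp add: numeral_2_eq_2 algebra_simps)
    also have "\<dots> = complex_of_real (a * (cmod (v 0))^2 + d * (cmod (v 1))^2 + 2 * Re x)"
      unfolding h1 h3 by simp
    finally show ?thesis unfolding x_def .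
  qed
  have "- Re ?x \<le> cmod ?x" using abs_Re_le_cmod[of ?x] by linarith
  also have "cmod ?x = cmod (v 0) * cmod (v 1) * cmod b" by (simp add: norm_mult)
  finally have "- Re ?x \<le> cmod (v 0) * cmod (v 1) * cmod b" .
  moreover have "2 * cmod (v 0) * cmod (v 1) * cmod b \<le> a * (cmod (v 0))^2 + d * (cmod (v 1))^2"
    using ineq2 assms by simp
  ultimately have "0 \<le> a * (cmod (v 0))^2 + d * (cmod (v 1))^2 + 2 * Re ?x" by linarith
  thus "0 \<le> (\<Sum>i<2. \<Sum>j<2. cnj (v i) * (if i = 0 then (if j = 0 then complex_of_real a else b)
                                   else (if j = 0 then cnj b else complex_of_real d)) * v j)"
    unfolding e by (simp add: less_eq_complex_def)
qed



theorem lemma7p1: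
  fixes c :: "('n::finite \<Rightarrow> nat) \<Rightarrow> ('n \<Rightarrow> nat) \<Rightarrow> complex"
    and N m :: nat
    and f :: "nat \<Rightarrow> ('n \<Rightarrow> nat) \<Rightarrow> complex"
  assumes herm: "hermitian_symmetric_poly c"
    and nonneg: "\<forall>z. 0 \<le> hsp_eval c z z"
    and Npos: "N > 0"
    and fpoly: "\<forall>j<m. holo_poly (f j)"
    and sos: "\<forall>z. (hsp_eval c z z) ^ N = complex_of_real (\<Sum>j<m. (cmod (holo_poly_eval (f j) z))\<^sup>2)"
  shows "\<forall>z w :: complex ^ 'n. nonneg_definite 2
           (\<lambda>i j. hsp_eval c (if i = 0 then z else w) (if j = 0 then z else w))"
proof (intro allI)
  fix z w :: "complex ^ 'n"
  define S where "S = coeff_support c"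
  have finS: "finite S" using herm unfolding S_def hermitian_symmetric_poly_def by simp
  define H where "H z \<zeta> = (\<Sum>p\<in>S. c (fst p) (snd p) * monom_eval z (fst p) * monom_eval \<zeta> (snd p))" for z \<zeta>
  have hH: "hsp_eval c z w = H z (cnjv w)" for z w
    unfolding hsp_eval_def H_def S_def by (simp add: cnj_monom)
  define F where "F j z = holo_poly_eval (f j) z" for j z
  define Fc where "Fc j \<zeta> = (\<Sum>\<alpha>\<in>{\<alpha>. f j \<alpha> \<noteq> 0}. cnj (f j \<alpha>) * monom_eval \<zeta> \<alpha>)" for j \<zeta>
  have hFc: "Fc j (cnjv w) = cnj (F j w)" for j w
    unfolding Fc_def F_def holo_poly_eval_def by (simp add: cnj_monom)
  have repH: "rep H" unfolding H_def by (rule rep_finsum[OF finS])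
  have repF: "rep (\<lambda>z \<zeta>. F j z)" if "j < m" for j
  proof -
    have fin: "finite {\<alpha>. f j \<alpha> \<noteq> 0}" using fpoly that unfolding holo_poly_def by blast
    have "rep (\<lambda>z \<zeta>. \<Sum>\<alpha>\<in>{\<alpha>. f j \<alpha> \<noteq> 0}. f j \<alpha> * monom_eval z \<alpha> * monom_eval \<zeta> (\<lambda>i. 0))"
      by (rule rep_finsum[OF fin])
    thus ?thesis unfolding F_def holo_poly_eval_def by (simp add: monom_0)
  qed
  have repFc: "rep (\<lambda>z \<zeta>. Fc j \<zeta>)" if "j < m" for j
  proof -
    have fin: "finite {\<alpha>. f j \<alpha> \<noteq> 0}" using fpoly that unfolding holo_poly_def by blast
    have "rep (\<lambda>z \<zeta>. \<Sum>\<alpha>\<in>{\<alpha>. f j \<alpha> \<noteq> 0}. cnj (f j \<alpha>) * monom_eval z (\<lambda>i. 0) * monom_eval \<zeta> \<alpha>)"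
      by (rule rep_finsum[OF fin])
    thus ?thesis unfolding Fc_def by (simp add: monom_0)
  qed
  define G where "G z \<zeta> = H z \<zeta> ^ N - (\<Sum>j<m. F j z * Fc j \<zeta>)" for z \<zeta>
  have repG: "rep G" unfolding G_def
    by (intro rep_diff rep_power repH rep_sum rep_mult repF repFc)
  have G0: "\<forall>z. G z (cnjv z) = 0"
  proof
    fix z
    have "H z (cnjv z) ^ N = complex_of_real (\<Sum>j<m. (cmod (F j z))\<^sup>2)"
      using sos hH unfolding F_def by metis
    also have "\<dots> = (\<Sum>j<m. F j z * cnj (F j z))"
      unfolding of_real_sum by (intro sum.cong refl) (rule complex_norm_square)
    finally show "G z (cnjv z) = 0" unfolding G_def hFc by simp
  qed
  have key: "hsp_eval c z w ^ N = (\<Sum>j<m. F j z * cnj (F j w))" for z w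
    using rep_polar[OF repG G0, of z "cnjv w"] unfolding G_def hH hFc by simp
  have hsym: "hsp_eval c w z = cnj (hsp_eval c z w)" for z w
  proof -
    have hc: "cnj (c \<alpha> \<beta>) = c \<beta> \<alpha>" for \<alpha> \<beta>
      using herm unfolding hermitian_symmetric_poly_def by (metis complex_cnj_cnj)
    have mem: "prod.swap p \<in> S" if "p \<in> S" for p
    proof -
      have "c (fst p) (snd p) \<noteq> 0" using that unfolding S_def coeff_support_def by simp
      hence "c (snd p) (fst p) \<noteq> 0" using hc[of "fst p" "snd p"] by (metis complex_cnj_zero_iff)
      thus ?thesis unfolding S_def coeff_support_def by simp
    qed
    have sw: "prod.swap ` S = S"
    proof
      show "prod.swap ` S \<subseteq> S" using mem by blast
      show "S \<subseteq> prod.swap ` S"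
      proof
        fix p assume "p \<in> S"
        hence "prod.swap p \<in> S" by (rule mem)
        moreover have "p = prod.swap (prod.swap p)" by simp
        ultimately show "p \<in> prod.swap ` S" by blast
      qed
    qed
    have "hsp_eval c w z = (\<Sum>p\<in>prod.swap ` S. c (fst p) (snd p) * monom_eval w (fst p) * cnj (monom_eval z (snd p)))"
      unfolding hsp_eval_def S_def[symmetric] sw ..
    also have "\<dots> = (\<Sum>p\<in>S. c (snd p) (fst p) * monom_eval w (snd p) * cnj (monom_eval z (fst p)))"
      by (subst sum.reindex) (auto simp: inj_on_def)
    also have "\<dots> = cnj (hsp_eval c z w)"
      unfolding hsp_eval_def S_def[symmetric] cnj_sum
      by (intro sum.cong refl) (simp add: hc ac_simps)
    finally show ?thesis .
  qed
  have real_diag: "\<exists>a. a \<ge> 0 \<and> hsp_eval c u u = complex_of_real a \<and> (\<Sum>j<m. (cmod (F j u))\<^sup>2) = a ^ N" for u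
  proof -
    have "0 \<le> hsp_eval c u u" using nonneg by blast
    hence i: "Im (hsp_eval c u u) = 0" and r: "Re (hsp_eval c u u) \<ge> 0" by (auto simp: less_eq_complex_def)
    define a where "a = Re (hsp_eval c u u)"
    have e: "hsp_eval c u u = complex_of_real a" using i unfolding a_def by (simp add: complex_eq_iff)
    have "complex_of_real (a ^ N) = complex_of_real (\<Sum>j<m. (cmod (F j u))\<^sup>2)"
      using sos e unfolding F_def by (metis of_real_power)
    hence "(\<Sum>j<m. (cmod (F j u))\<^sup>2) = a ^ N" using of_real_eq_iff by metis
    thus ?thesis using e r a_def by blast
  qed
  obtain a where a: "a \<ge> 0" "hsp_eval c z z = complex_of_real a" "(\<Sum>j<m. (cmod (F j z))\<^sup>2) = a ^ N"
    using real_diag by blast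
  obtain d where d: "d \<ge> 0" "hsp_eval c w w = complex_of_real d" "(\<Sum>j<m. (cmod (F j w))\<^sup>2) = d ^ N"
    using real_diag by blast
  define b where "b = hsp_eval c z w"
  have "cmod (b ^ N) \<le> (\<Sum>j<m. cmod (F j z) * cmod (F j w))"
    unfolding b_def key by (rule order_trans[OF norm_sum]) (simp add: norm_mult)
  hence "(cmod (b ^ N))^2 \<le> (\<Sum>j<m. cmod (F j z) * cmod (F j w))^2"
    by (rule power_mono) simp
  also have "\<dots> \<le> (\<Sum>j<m. (cmod (F j z))^2) * (\<Sum>j<m. (cmod (F j w))^2)"
    by (rule Cauchy_Schwarz_ineq_sum)
  also have "\<dots> = (a * d) ^ N" using a d by (simp add: power_mult_distrib)
  finally have "((cmod b)^2) ^ N \<le> (a * d) ^ N"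
    by (simp add: norm_power power_mult[symmetric] mult.commute)
  have bb: "(cmod b)^2 \<le> a * d"
  proof -
    obtain n where "N = Suc n" using Npos gr0_implies_Suc by blast
    thus ?thesis using power_le_imp_le_base[of "(cmod b)^2" n "a*d"] a(1) d(1) \<open>((cmod b)^2) ^ N \<le> (a * d) ^ N\<close> by simp
  qed
  have "nonneg_definite 2 (\<lambda>i j. if i = 0 then (if j = 0 then complex_of_real a else b)
                                   else (if j = 0 then cnj b else complex_of_real d))"
    by (rule psd2[OF a(1) d(1) bb])
  moreover have "(\<lambda>(i::nat) (j::nat). hsp_eval c (if i = 0 then z else w) (if j = 0 then z else w))
     = (\<lambda>i j. if i = 0 then (if j = 0 then complex_of_real a else b)
                                   else (if j = 0 then cnj b else complex_of_real d))"
    using a(2) d(2) hsym[of z w] unfolding b_def by (intro ext) auto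
  ultimately show "nonneg_definite 2 (\<lambda>i j. hsp_eval c (if i = 0 then z else w) (if j = 0 then z else w))"
    by (simp only:)
qed


end
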